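(* Let $q$ be a prime power with $q\equiv 1\pmod 4$, $n\ge 2$, and let $M=(m_{ij})$ be an $n\times n$ matrix with entries in $\mathbb{F}_q$. (i) If $m_{ij}+m_{ji}=0$ for all $1\le i<j\le n$ and $m_{ii}=m_{11}$ for all $i$, then $\mathrm{Num}_k(M)_q=\{km_{11}\}$ for all $k\in\mathbb{F}_q$ and $0\in\mathrm{Num}'_0(M)$. (ii) If $M$ does not satisfy the hypotheses of (i), then $\mathrm{Num}_0(M)$ contains at least $(q-1)/2$ elements of $\mathbb{F}_q^*$.
   Context: The Hermitian form on $\mathbb{F}_{q^2}^n$ is $\langle u,v\rangle=\sum_i u_i^qv_i$. For an $n\times n$ matrix $M$ over $\mathbb{F}_{q^2}$: $\mathrm{Num}_0(M)=\{\langle u,Mu\rangle: u\in\mathbb{F}_{q^2}^n,\ \langle u,u\rangle=0\}$, $\mathrm{Num}'_0(M)=\{\langle u,Mu\rangle: u\in\mathbb{F}_{q^2}^n\setminus\{0\},\ \langle u,u\rangle=0\}$. For $M$ with entries in $\mathbb{F}_q$ and $k\in\mathbb{F}_q$: $\mathrm{Num}_k(M)_q=\{\langle u,Mu\rangle: u\in\mathbb{F}_q^n,\ \langle u,u\rangle=k\}$; for $u=(x_1,\dots,x_n)\in\mathbb{F}_q^n$, $\langle u,u\rangle=\sum x_i^2$ and $\langle u,Mu\rangle=\sum_{i,j}m_{ij}x_ix_j$. *)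

theory Defs
  imports "HOL-Analysis.Analysis"
begin

text \<open>We work inside a finite field 'a of order q^2 (playing the role of F_{q^2});
  F_q is its unique subfield of order q, namely the fixed points of x \<mapsto> x^q.
  Vectors of length n are 'a^'n with n = CARD('n).\<close>

definition Fq :: "nat \<Rightarrow> 'a::{finite,field} set" where
  "Fq q = {x. x ^ q = x}"

definition herm :: "nat \<Rightarrow> 'a::{finite,field}^'n \<Rightarrow> 'a^'n \<Rightarrow> 'a" where
  "herm q u v = (\<Sum>i\<in>UNIV. u$i ^ q * v$i)"

definition Num0 :: "nat \<Rightarrow> 'a::{finite,field}^'n^'n \<Rightarrow> 'a set" where
  "Num0 q M = {herm q u (M *v u) | u. herm q u u = 0}"

definition Num0' :: "nat \<Rightarrow> 'a::{finite,field}^'n^'n \<Rightarrow> 'a set" where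
  "Num0' q M = {herm q u (M *v u) | u. u \<noteq> 0 \<and> herm q u u = 0}"

definition Numk :: "nat \<Rightarrow> 'a \<Rightarrow> 'a::{finite,field}^'n^'n \<Rightarrow> 'a set" where
  "Numk q k M = {herm q u (M *v u) | u. (\<forall>i. u$i \<in> Fq q) \<and> herm q u u = k}"

end

theory Submission
  imports Defs "HOL-Number_Theory.Residues" "HOL-Computational_Algebra.Polynomial"
begin

lemma poly_bound:
  fixes a b :: "'a::field"
  assumes "n \<ge> 2"
  shows "finite {x. x^n + a*x = b} \<and> card {x. x^n + a*x = b} \<le> n"
proof -
  define p where "p = Polynomial.monom (1::'a) n + [:-b, a:]"
  have d1: "degree [:-b, a:] < degree (Polynomial.monom (1::'a) n)"
    using assms by (simp add: degree_monom_eq)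
  have dp: "degree p = n"
    unfolding p_def by (subst degree_add_eq_left[OF d1]) (simp add: degree_monom_eq)
  have "p \<noteq> 0" using dp assms by auto
  hence "card {x. poly p x = 0} \<le> degree p" by (rule card_poly_roots_bound)
  moreover have "{x. poly p x = 0} = {x. x^n + a*x = b}"
    by (auto simp: p_def poly_monom algebra_simps)
  moreover have "finite {x. poly p x = 0}" using \<open>p \<noteq> 0\<close> by (rule poly_roots_finite)
  ultimately show ?thesis using dp by simp
qed

lemma pow_card:
  fixes x :: "'a::{finite,field}"
  shows "x ^ CARD('a) = x"
proof (cases "x = 0")
  case False
  have "x * (\<Prod>y\<in>UNIV-{0}. x * y) = x * x ^ (card (UNIV :: 'a set) - 1) * \<Prod>(UNIV-{0})"
    by (simp add: prod.distrib mult_ac)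
  also have "x * x ^ (card (UNIV :: 'a set) - 1) = x ^ Suc (card (UNIV :: 'a set) - 1)"
    by (subst power_Suc) auto
  also have "Suc (card (UNIV :: 'a set) - 1) = card (UNIV :: 'a set)"
    using finite_UNIV_card_ge_0[where ?'a = 'a] by simp
  also have "(\<Prod>y\<in>UNIV-{0}. x * y) = (\<Prod>y\<in>UNIV-{0}. y)"
    by (rule prod.reindex_bij_witness[of _ "\<lambda>y. y / x" "\<lambda>y. x * y"]) (use False in auto)
  finally show ?thesis
    by simp
qed (use finite_UNIV_card_ge_0[where ?'a = 'a] in auto)

lemma char_eq:
  assumes "prime p" "CARD('a::{finite,field}) = (p^e)^2"
  shows "CHAR('a) = p"
proof -
  have pos: "CHAR('a) > 0" by (rule finite_imp_CHAR_pos) simp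
  have pr: "prime CHAR('a)" by (rule prime_CHAR_semidom[OF pos])
  have "CHAR('a) dvd p ^ (e*2)" using CHAR_dvd_CARD[where 'a='a] assms(2)
    by (simp add: power_mult)
  hence "CHAR('a) dvd p" using pr prime_dvd_power by blast
  thus "CHAR('a) = p" using pr assms(1) by (simp add: primes_dvd_imp_eq)
qed

lemma frob:
  fixes x y :: "'a::{finite,field}"
  assumes "prime p" "CARD('a) = (p^e)^2"
  shows "(x + y) ^ (p^e) = x^(p^e) + y^(p^e)"
proof -
  have pos: "CHAR('a) > 0" by (rule finite_imp_CHAR_pos) simp
  have pr: "prime CHAR('a)" by (rule prime_CHAR_semidom[OF pos])
  have "CHAR('a) dvd p ^ (e*2)" using CHAR_dvd_CARD[where 'a='a] assms(2)
    by (simp add: power_mult)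
  hence "CHAR('a) dvd p" using pr prime_dvd_power by blast
  hence "CHAR('a) = p" using pr assms(1) by (simp add: primes_dvd_imp_eq)
  thus ?thesis using freshmans_dream'[OF pr, of "p^e"] by simp
qed

lemma fiber_bound:
  assumes "finite A" "\<And>y. y \<in> f ` A \<Longrightarrow> card {x\<in>A. f x = y} \<le> k"
  shows "card A \<le> k * card (f ` A)"
proof -
  have "A = (\<Union>y\<in>f ` A. {x\<in>A. f x = y})" by auto
  hence "card A \<le> (\<Sum>y\<in>f ` A. card {x\<in>A. f x = y})"
    by (metis card_UN_le assms(1) finite_imageI)
  also have "\<dots> \<le> (\<Sum>y\<in>f ` A. k)" by (rule sum_mono) (rule assms(2))
  finally show ?thesis by (simp add: mult.commute)
qed

lemma sq_fiber:
  fixes c :: "'a::field"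
  shows "card {x\<in>A. x^2 = c} \<le> 2"
proof -
  have "card {x\<in>A. x^2 = c} \<le> card {x. x^2 + 0*x = c}"
    by (rule card_mono) (use poly_bound[of 2 0 c] in auto)
  also have "\<dots> \<le> 2" using poly_bound[of 2 0 c] by simp
  finally show ?thesis .
qed

lemma sum2:
  fixes A B :: "'b::comm_monoid_add"
  assumes "i \<noteq> j"
  shows "(\<Sum>k\<in>(UNIV::'n::finite set). if k = i then A else if k = j then B else 0) = A + B"
proof -
  have "\<And>k. (if k = i then A else if k = j then B else 0) = (if k = i then A else 0) + (if k = j then B else 0)"
    using assms by auto
  hence "(\<Sum>k\<in>(UNIV::'n set). if k = i then A else if k = j then B else 0)
     = (\<Sum>k\<in>UNIV. (if k = i then A else 0)) + (\<Sum>k\<in>UNIV. (if k = j then B else 0))"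
    by (simp add: sum.distrib)
  thus ?thesis by simp
qed

definition tv :: "'n::finite \<Rightarrow> 'n \<Rightarrow> 'a::zero \<Rightarrow> 'a \<Rightarrow> 'a^'n" where
  "tv i j a b = (\<chi> k. if k = i then a else if k = j then b else 0)"

lemma herm_tv:
  fixes a b :: "'a::{finite,field}"
  assumes "i \<noteq> j" "q > 0"
  shows "herm q (tv i j a b) v = a^q * v$i + b^q * v$j"
proof -
  have "\<And>k. (tv i j a b)$k ^ q * v$k = (if k = i then a^q * v$i else if k = j then b^q * v$j else 0)"
    using assms by (auto simp: tv_def)
  thus ?thesis unfolding herm_def using sum2[OF assms(1)] by simp
qed

lemma mv_tv:
  fixes a b :: "'a::{finite,field}"
  assumes "i \<noteq> j"
  shows "(M *v tv i j a b)$k = M$k$i * a + M$k$j * b"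
proof -
  have "\<And>l. M$k$l * (tv i j a b)$l = (if l = i then M$k$i * a else if l = j then M$k$j * b else 0)"
    using assms by (auto simp: tv_def)
  thus ?thesis unfolding matrix_vector_mult_def using sum2[OF assms(1)] by simp
qed

lemma herm_smult_l: "herm q (c *s u) v = c^q * herm q u v"
  unfolding herm_def by (simp add: sum_distrib_left power_mult_distrib mult_ac)

lemma herm_smult_r: "herm q u (c *s v) = c * herm q u v"
  unfolding herm_def by (simp add: sum_distrib_left mult_ac)

lemma mv_smult: "M *v (c *s u) = c *s (M *v (u::'a::comm_ring_1^'n))"
  by (simp add: vec_eq_iff matrix_vector_mult_def sum_distrib_left ac_simps)

lemma quad_i:
  fixes M :: "'a::{finite,field}^'n^'n" and u :: "'a^'n"
  assumes "(2::'a) \<noteq> 0" "\<forall>i j. i\<noteq>j \<longrightarrow> M$i$j + M$j$i = 0" "\<forall>i j. M$i$i = M$j$j"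
    "\<forall>k. u$k^q = u$k"
  shows "herm q u (M *v u) = M$i$i * herm q u u"
proof -
  define S where "S = (\<Sum>k\<in>UNIV. \<Sum>l\<in>UNIV. M$k$l*u$k*u$l)"
  have h1: "herm q u u = (\<Sum>k\<in>UNIV. u$k*u$k)" by (simp add: herm_def assms(4))
  have h2: "herm q u (M*v u) = S"
    by (simp add: S_def herm_def matrix_vector_mult_def assms(4) sum_distrib_left mult_ac)
  have h3: "S = (\<Sum>k\<in>UNIV. \<Sum>l\<in>UNIV. M$l$k*u$k*u$l)"
    unfolding S_def by (subst sum.swap) (simp add: mult_ac)
  have h4: "M$k$l*u$k*u$l + M$l$k*u$k*u$l = (if l = k then 2*M$i$i*(u$k*u$k) else 0)" for k l
  proof (cases "l = k")
    case True
    have e: "M$k$k = M$i$i" by (rule assms(3)[rule_format])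
    have "M$k$k*u$k*u$k + M$k$k*u$k*u$k = 2*M$i$i*(u$k*u$k)"
      unfolding e by (simp only: mult_2 mult.assoc distrib_right)
    thus ?thesis using True by simp
  next
    case False
    hence "M$k$l + M$l$k = 0" by (intro assms(2)[rule_format]) auto
    moreover have "M$k$l*u$k*u$l + M$l$k*u$k*u$l = (M$k$l + M$l$k)*u$k*u$l"
      by (simp add: distrib_right)
    ultimately show ?thesis using False by simp
  qed
  have "S + S = (\<Sum>k\<in>UNIV. \<Sum>l\<in>UNIV. M$k$l*u$k*u$l + M$l$k*u$k*u$l)"
    by (subst h3) (simp add: S_def sum.distrib)
  also have "\<dots> = (\<Sum>k\<in>UNIV. 2*M$i$i*(u$k*u$k))" by (simp only: h4) simp
  also have "\<dots> = 2 * (M$i$i * herm q u u)" by (simp add: h1 sum_distrib_left mult_ac)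
  finally have "S + S = 2 * (M$i$i * herm q u u)" .
  hence "2 * S = 2 * (M$i$i * herm q u u)" by (simp only: mult_2)
  thus ?thesis using assms(1) h2 by simp
qed

theorem corollary4:
  fixes q :: nat and M :: "'a::{finite,field}^'n^'n"
  assumes "\<exists>p e. prime p \<and> e > 0 \<and> q = p ^ e"
    and "q mod 4 = 1"
    and "CARD('a) = q ^ 2"
    and "CARD('n) \<ge> 2"
    and "\<forall>i j. M$i$j \<in> Fq q"
  shows "((\<forall>i j. i \<noteq> j \<longrightarrow> M$i$j + M$j$i = 0) \<and> (\<forall>i j. M$i$i = M$j$j) \<longrightarrow>
            (\<forall>i. \<forall>k\<in>Fq q. Numk q k M = {k * M$i$i}) \<and> 0 \<in> Num0' q M)
       \<and> (\<not> ((\<forall>i j. i \<noteq> j \<longrightarrow> M$i$j + M$j$i = 0) \<and> (\<forall>i j. M$i$i = M$j$j)) \<longrightarrow>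
            card (Num0 q M \<inter> (Fq q - {0})) \<ge> (q - 1) div 2)"
proof -
  obtain p e where pe: "prime p" "e > 0" "q = p ^ e" using assms(1) by blast
  have "p \<ge> 2" using pe(1) prime_ge_2_nat by blast
  hence "p ^ 1 \<le> p ^ e" using pe(2) by (intro power_increasing) auto
  hence q2: "q \<ge> 2" using \<open>p \<ge> 2\<close> pe(3) by simp
  have q5: "q \<ge> 5" using q2 assms(2) by presburger
  have oddq: "odd q" using assms(2) by presburger
  have card2: "CARD('a) = (p^e)^2" using assms(3) pe(3) by simp
  have frb: "(x + y)^q = x^q + y^q" for x y :: 'a
    using frob[OF pe(1) card2] pe(3) by simp
  have frbd: "(x - y)^q = x^q - y^q" for x y :: 'a
    using frb[of x "-y"] oddq by simp
  have two: "(2::'a) \<noteq> 0"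
  proof
    assume "(2::'a) = 0"
    hence "of_nat 2 = (0::'a)" by simp
    hence "CHAR('a) dvd 2" using of_nat_eq_0_iff_char_dvd by blast
    hence "p dvd 2" using char_eq[OF pe(1) card2] by simp
    hence "p \<le> 2" by (simp add: dvd_imp_le)
    hence "p = 2" using prime_gt_1_nat[OF pe(1)] by linarith
    thus False using oddq pe by simp
  qed
  have FqI: "x \<in> Fq q \<longleftrightarrow> x^q = x" for x :: 'a by (simp add: Fq_def)
  have Fq_add: "x + y \<in> Fq q" if "x \<in> Fq q" "y \<in> Fq q" for x y :: 'a
    using that by (simp add: FqI frb)
  have Fq_diff: "x - y \<in> Fq q" if "x \<in> Fq q" "y \<in> Fq q" for x y :: 'a
    using that by (simp add: FqI frbd)
  have Fq_mul: "x * y \<in> Fq q" if "x \<in> Fq q" "y \<in> Fq q" for x y :: 'a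
    using that by (simp add: FqI power_mult_distrib)
  have Fq_neg: "- x \<in> Fq q" if "x \<in> Fq q" for x :: 'a
    using that oddq by (simp add: FqI)
  have Fq_pow: "x ^ r \<in> Fq q" if "x \<in> Fq q" for x :: 'a and r
    using that by (simp add: FqI flip: power_mult) (metis mult.commute power_mult)
  have Fq0: "(0::'a) \<in> Fq q" and Fq1: "(1::'a) \<in> Fq q" using q2 by (auto simp: FqI)
  have finFq: "finite (Fq q :: 'a set)" by simp
  have cardU: "card (Fq q :: 'a set) \<le> q"
  proof -
    have "(Fq q :: 'a set) = {x. x^q + (-1)*x = 0}" by (auto simp: Fq_def)
    thus ?thesis using poly_bound[OF q2, of "-1::'a" 0] by simp
  qed
  define \<phi> where "\<phi> = (\<lambda>x::'a. x^q - x)"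
  have pc: "x^(q*q) = x" for x :: 'a using pow_card[of x] assms(3) by (simp add: power2_eq_square)
  have img: "\<phi> ` UNIV \<subseteq> {y. y^q + 1*y = 0}"
  proof clarify
    fix x :: 'a
    have "(\<phi> x)^q = (x^q)^q - x^q" by (simp add: \<phi>_def frbd)
    also have "\<dots> = x - x^q" by (simp add: pc flip: power_mult)
    finally show "(\<phi> x)^q + 1 * \<phi> x = 0" by (simp add: \<phi>_def)
  qed
  have cimg: "card (\<phi> ` UNIV) \<le> q"
  proof -
    have "card (\<phi> ` UNIV) \<le> card {y::'a. y^q + 1*y = 0}" by (rule card_mono[OF _ img]) simp
    thus ?thesis using poly_bound[OF q2, of "1::'a" 0] by simp
  qed
  have fib: "card {x\<in>UNIV. \<phi> x = y} \<le> card (Fq q :: 'a set)" if "y \<in> \<phi> ` UNIV" for y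
  proof -
    obtain x0 where x0: "y = \<phi> x0" using \<open>y \<in> \<phi> ` UNIV\<close> by blast
    have "{x\<in>UNIV. \<phi> x = y} \<subseteq> (\<lambda>z. x0 + z) ` Fq q"
    proof (rule subsetI)
      fix x assume "x \<in> {x\<in>UNIV. \<phi> x = y}"
      hence "\<phi> x = y" by simp
      hence h: "x^q - x = x0^q - x0" using x0 by (simp add: \<phi>_def)
      have "(x - x0)^q = x^q - x0^q" by (rule frbd)
      also have "\<dots> = x - x0" using h by (simp add: algebra_simps)
      finally have "(x - x0)^q = x - x0" .
      hence "x - x0 \<in> Fq q" by (simp add: FqI)
      thus "x \<in> (\<lambda>z. x0 + z) ` Fq q" by (intro image_eqI[of _ _ "x - x0"]) auto
    qed
    hence "card {x\<in>UNIV. \<phi> x = y} \<le> card ((\<lambda>z. x0 + z) ` Fq q)" by (intro card_mono) auto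
    also have "\<dots> \<le> card (Fq q :: 'a set)" by (rule card_image_le) simp
    finally show ?thesis .
  qed
  have "CARD('a) \<le> card (Fq q :: 'a set) * card (\<phi> ` UNIV)"
    using fiber_bound[of UNIV \<phi> "card (Fq q :: 'a set)", OF _ fib] by simp
  also have "\<dots> \<le> card (Fq q :: 'a set) * q" by (rule mult_le_mono2[OF cimg])
  finally have "q * q \<le> card (Fq q :: 'a set) * q" unfolding assms(3) power2_eq_square .
  hence "q \<le> card (Fq q :: 'a set)" using q2 by (simp only: mult_le_cancel2)
  hence cardFq: "card (Fq q :: 'a set) = q" using cardU by simp
  have cardFq0: "card (Fq q - {0::'a}) = q - 1" using cardFq Fq0 by (simp add: card_Diff_singleton)
  define m where "m = (q - 1) div 2"
  have m2: "m \<ge> 2" using q5 by (simp add: m_def)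
  have qm: "q - 1 = 2 * m" using oddq by (simp add: m_def)
  have meven: "m = 2 * (m div 2)" using assms(2) unfolding m_def by presburger
  obtain x :: 'a where x: "x \<in> Fq q" "x \<noteq> 0" "x^m \<noteq> 1"
  proof -
    have "\<not> (Fq q - {0::'a}) \<subseteq> {x. x^m + 0*x = 1}"
    proof
      assume "(Fq q - {0::'a}) \<subseteq> {x. x^m + 0*x = 1}"
      hence "card (Fq q - {0::'a}) \<le> card {x::'a. x^m + 0*x = 1}" by (intro card_mono) simp_all
      also have "\<dots> \<le> m" using poly_bound[OF m2, of "0::'a" 1] by simp
      finally show False using cardFq0 qm m2 by simp
    qed
    thus ?thesis using that by auto
  qed
  have "x^q = x" using x(1) by (simp add: FqI)
  moreover have "q = Suc (2*m)" using qm q2 by simp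
  ultimately have "x * (x^m)^2 = x * 1" by (simp add: power_mult[symmetric] mult.commute)
  hence "(x^m)^2 = 1" using x(2) by simp
  hence xm: "x^m = -1" using x(3) power2_eq_1_iff by blast
  define \<iota> where "\<iota> = x ^ (m div 2)"
  have iota2: "\<iota>^2 = -1" unfolding \<iota>_def using xm meven
    by (metis power_mult mult.commute)
  have iotaF: "\<iota> \<in> Fq q" unfolding \<iota>_def using x(1) by (rule Fq_pow)
  have iotaq: "\<iota>^q = \<iota>" using iotaF by (simp add: FqI)
  have iota0: "\<iota> \<noteq> 0" using iota2 by auto
  obtain i0 j0 :: 'n where ij0: "i0 \<noteq> j0"
  proof -
    have "\<exists>a b::'n. a \<noteq> b"
    proof (rule ccontr)
      assume "\<not> ?thesis"
      hence "(UNIV::'n set) \<subseteq> {undefined}" by auto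
      hence "CARD('n) \<le> 1" using card_mono[of "{undefined}" UNIV] by simp
      thus False using assms(4) by simp
    qed
    thus ?thesis using that by blast
  qed
  have q0: "q > 0" using q2 by simp
  have MF: "(M$i$j)^q = M$i$j" for i j using assms(5) by (simp add: FqI)
  show ?thesis
  proof (intro conjI impI)
    assume H: "(\<forall>i j. i \<noteq> j \<longrightarrow> M$i$j + M$j$i = 0) \<and> (\<forall>i j. M$i$i = M$j$j)"
    have Q: "herm q u (M *v u) = M$i$i * herm q u u" if "\<forall>k. u$k^q = u$k" for u i
      using quad_i[OF two] H that by blast
    show "\<forall>i. \<forall>k\<in>Fq q. Numk q k M = {k * M$i$i}"
    proof (intro allI ballI)
      fix i and k :: 'a assume k: "k \<in> Fq q"
      define S where "S = (\<lambda>x. x^2) ` (Fq q :: 'a set)"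
      define T where "T = (\<lambda>x. k - x^2) ` (Fq q :: 'a set)"
      have "card (Fq q :: 'a set) \<le> 2 * card S" unfolding S_def
        by (rule fiber_bound[OF finFq]) (rule sq_fiber)
      hence cS: "q + 1 \<le> 2 * card S" using cardFq oddq by presburger
      have "card (Fq q :: 'a set) \<le> 2 * card T" unfolding T_def
      proof (rule fiber_bound[OF finFq])
        fix y
        have "{x \<in> Fq q. k - x^2 = y} = {x \<in> Fq q. x^2 = k - y}" by auto
        thus "card {x \<in> Fq q. k - x^2 = y} \<le> 2" using sq_fiber by metis
      qed
      hence cT: "q + 1 \<le> 2 * card T" using cardFq oddq by presburger
      have "S \<union> T \<subseteq> Fq q" unfolding S_def T_def
        using k by (auto simp: power2_eq_square intro!: Fq_mul Fq_diff)
      hence "card (S \<union> T) \<le> q" using cardFq card_mono[OF finFq] by metis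
      moreover have "card (S \<union> T) + card (S \<inter> T) = card S + card T"
        using card_Un_Int[of S T] by simp
      ultimately have "card (S \<inter> T) > 0" using cS cT by linarith
      then obtain y where "y \<in> S" "y \<in> T" by (metis card_gt_0_iff disjoint_iff)
      then obtain a b where ab: "a \<in> Fq q" "b \<in> Fq q" "a^2 + b^2 = k"
        unfolding S_def T_def by auto
      define u where "u = tv i0 j0 a b"
      have uF: "\<forall>l. u$l \<in> Fq q" using ab Fq0 by (simp add: u_def tv_def)
      have uq: "\<forall>l. u$l^q = u$l" using uF by (simp add: FqI)
      have huu: "herm q u u = k"
        unfolding u_def herm_tv[OF ij0 q0] using ab ij0 by (simp add: tv_def power2_eq_square FqI)
      show "Numk q k M = {k * M$i$i}"
      proof
        show "Numk q k M \<subseteq> {k * M$i$i}"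
        proof
          fix z assume "z \<in> Numk q k M"
          then obtain v where v: "\<forall>l. v$l \<in> Fq q" "herm q v v = k" "z = herm q v (M *v v)"
            unfolding Numk_def by blast
          have vq: "\<forall>l. v$l^q = v$l" using v(1) by (simp add: FqI)
          have "z = M$i$i * k" using Q[OF vq, of i] v(2,3) by simp
          thus "z \<in> {k * M$i$i}" by (simp add: mult.commute)
        qed
        show "{k * M$i$i} \<subseteq> Numk q k M"
          using Q[OF uq, of i] huu uF unfolding Numk_def by (auto simp: mult.commute intro!: exI[of _ u])
      qed
    qed
    define u where "u = tv i0 j0 1 \<iota>"
    have uq: "\<forall>l. u$l^q = u$l" using iotaq q0 by (simp add: u_def tv_def)
    have huu: "herm q u u = 0"
      unfolding u_def herm_tv[OF ij0 q0] using iotaq iota2 ij0 by (simp add: tv_def power2_eq_square)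
    have "u \<noteq> 0" by (simp add: u_def tv_def vec_eq_iff) (metis zero_neq_one)
    moreover have "herm q u (M *v u) = 0" using Q[OF uq, of i0] huu by simp
    ultimately show "0 \<in> Num0' q M" using huu unfolding Num0'_def by force
  next
    assume H: "\<not> ((\<forall>i j. i \<noteq> j \<longrightarrow> M$i$j + M$j$i = 0) \<and> (\<forall>i j. M$i$i = M$j$j))"
    then obtain i j where ij: "i \<noteq> j" "M$i$j + M$j$i \<noteq> 0 \<or> M$i$i \<noteq> M$j$j" by metis
    define V where "V = (\<lambda>\<epsilon>. M$i$i + M$i$j*\<epsilon> + \<epsilon>*(M$j$i + M$j$j*\<epsilon>))"
    obtain \<epsilon> where eps: "\<epsilon> \<in> Fq q" "\<epsilon>^2 = -1" "V \<epsilon> \<noteq> 0"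
    proof (cases "V \<iota> = 0")
      case False thus ?thesis using that iotaF iota2 by blast
    next
      case True
      have "V (-\<iota>) \<noteq> 0"
      proof
        assume V2: "V (-\<iota>) = 0"
        have "V \<iota> + V (-\<iota>) = 2 * (M$i$i - M$j$j)"
        proof -
          have ii: "\<iota> * (\<iota> * X) = - X" for X
            using iota2 by (simp add: mult.assoc[symmetric] power2_eq_square)
          show ?thesis by (simp add: V_def algebra_simps ii)
        qed
        hence d: "M$i$i = M$j$j" using True V2 two by simp
        have "V \<iota> - V (-\<iota>) = 2 * \<iota> * (M$i$j + M$j$i)"
          by (simp add: V_def algebra_simps)
        hence "M$i$j + M$j$i = 0" using True V2 two iota0 by simp
        thus False using d ij(2) by simp
      qed
      thus ?thesis using that[of "-\<iota>"] Fq_neg[OF iotaF] iota2 by simp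
    qed
    have epsq: "\<epsilon>^q = \<epsilon>" using eps(1) by (simp add: FqI)
    define a where "a = V \<epsilon>"
    have aF: "a \<in> Fq q" unfolding a_def V_def
      using eps(1) assms(5) by (intro Fq_add Fq_mul) auto
    define u where "u = tv i j 1 \<epsilon>"
    have huu: "herm q u u = 0"
      unfolding u_def herm_tv[OF ij(1) q0] using epsq eps(2) ij(1) by (simp add: tv_def power2_eq_square)
    have hum: "herm q u (M *v u) = a"
      unfolding u_def herm_tv[OF ij(1) q0] mv_tv[OF ij(1)] using epsq ij(1) by (simp add: a_def V_def tv_def)
    define A where "A = (Fq q - {0::'a})"
    have sub: "(\<lambda>t. t^2 * a) ` A \<subseteq> Num0 q M \<inter> (Fq q - {0})"
    proof
      fix z assume "z \<in> (\<lambda>t. t^2 * a) ` A"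
      then obtain t where t: "t \<in> Fq q" "t \<noteq> 0" "z = t^2 * a" by (auto simp: A_def)
      have tq: "t^q = t" using t(1) by (simp add: FqI)
      have "herm q (t *s u) (t *s u) = 0" by (simp add: herm_smult_l herm_smult_r huu)
      moreover have "herm q (t *s u) (M *v (t *s u)) = z"
        by (simp add: mv_smult herm_smult_l herm_smult_r hum tq t(3) power2_eq_square)
      ultimately have "z \<in> Num0 q M" unfolding Num0_def by blast
      moreover have "z \<in> Fq q" using t aF by (simp add: power2_eq_square Fq_mul)
      moreover have "z \<noteq> 0" using t eps(3) by (simp add: a_def)
      ultimately show "z \<in> Num0 q M \<inter> (Fq q - {0})" by simp
    qed
    have "card A \<le> 2 * card ((\<lambda>t. t^2 * a) ` A)"
    proof (rule fiber_bound)
      show "finite A" by simp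
      fix y
      have "{t \<in> A. t^2 * a = y} = {t \<in> A. t^2 = y / a}"
        using eps(3) by (auto simp: a_def field_simps)
      thus "card {t \<in> A. t^2 * a = y} \<le> 2" using sq_fiber by metis
    qed
    also have "\<dots> \<le> 2 * card (Num0 q M \<inter> (Fq q - {0}))"
      using card_mono[OF _ sub] by simp
    finally show "card (Num0 q M \<inter> (Fq q - {0})) \<ge> (q - 1) div 2"
      using cardFq0 by (simp add: A_def)
  qed
qed

end
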